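(* Consider Case 3 of the problem described in the context (conductivity $k$ unknown; $\rho,c,\ell>0$, $T_m$, $T_0>T_m$, $q_0>0$ given), whose solution for $0<\alpha<1$ and any data is $k_\alpha=\frac{q_0^2\Gamma^2(1-\frac{\alpha}{2})}{\rho c(T_0-T_m)^2}[1-W(-\xi_\alpha;-\frac{\alpha}{2},1)]^2$, $T_\alpha(x,t)=T_0-\frac{T_0-T_m}{1-W(-\xi_\alpha;-\frac{\alpha}{2},1)}[1-W(-\frac{x}{\lambda_\alpha t^{\alpha/2}};-\frac{\alpha}{2},1)]$, $s_\alpha(t)=\lambda_\alpha\xi_\alpha t^{\alpha/2}$, $\lambda_\alpha=\frac{q_0\Gamma(1-\frac{\alpha}{2})}{\rho c(T_0-T_m)}[1-W(-\xi_\alpha;-\frac{\alpha}{2},1)]$, with $\xi_\alpha>0$ the unique solution of $\frac{x[1-W(-x;-\frac{\alpha}{2},1)]}{M_{\alpha/2}(x)}=\frac{c(T_0-T_m)\Gamma(1-\frac{\alpha}{2})}{\ell\Gamma(1+\frac{\alpha}{2})}$, $x>0$. Then, for any data, as $\alpha\to1^-$ this solution coincides with the following one (the classical case $\alpha=1$): $$s_1(t)=2\lambda_1\mu_1t^{1/2},\quad T_1(x,t)=T_0-\frac{T_0-T_m}{\operatorname{erf}(\mu_1)}\operatorname{erf}\left(\frac{x}{2\lambda_1t^{1/2}}\right),$$ $$k_1=\frac{\pi q_0^2}{\rho c(T_0-T_m)^2}\operatorname{erf}^2(\mu_1),\quad \lambda_1=\frac{q_0}{\rho\ell}\,\frac{\exp(-\mu_1^2)}{\mu_1},$$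 where $\mu_1>0$ is the unique solution of $$x\exp(x^2)\operatorname{erf}(x)=\frac{c(T_0-T_m)}{\ell\sqrt{\pi}},\quad x>0.$$
   Context: For $0<\alpha<1$ the Caputo derivative is $D^\alpha f(t)=\frac{1}{\Gamma(1-\alpha)}\int_0^t \frac{f'(\tau)}{(t-\tau)^\alpha}d\tau$, and $D^1f=f'$. The Wright function is $W(z;a,b)=\sum_{n\ge0}\frac{z^n}{n!\,\Gamma(na+b)}$ ($a>-1$, $b\in\mathbb{R}$); the Mainardi function is $M_\nu(z)=W(-z;-\nu,1-\nu)$. $\operatorname{erf}(x)=\frac{2}{\sqrt\pi}\int_0^x e^{-u^2}du$. The problem (for $0<\alpha\le 1$): with positive constants $\rho,k,c,\ell$, $\lambda^2=k/(\rho c)$, melting temperature $T_m$, $T_0>T_m$, $q_0>0$, find $s(t)$, $T(x,t)$ and the unknown coefficient with $D^\alpha T=\lambda^2T_{xx}$ in $0<x<s(t)$, $t>0$; $s(0)=0$; $T(x,0)=T(+\infty,t)=T_m$; $T(s(t),t)=T_m$; $-kT_x(s(t),t)=\rho\ell D^\alpha s(t)$; $T(0,t)=T_0$; $kT_x(0,t)=-q_0/t^{\alpha/2}$ for $t>0$. *)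

theory Defs
  imports "HOL-Analysis.Analysis"
begin

text \<open>Wright function W(z;a,b) = sum_n z^n / (n! Gamma(n a + b)); 1/Gamma is rGamma
  (which is 0 at the poles of Gamma, as usual).\<close>
definition Wright :: "real \<Rightarrow> real \<Rightarrow> real \<Rightarrow> real" where
  "Wright z a b = (\<Sum>n. z ^ n / fact n * rGamma (real n * a + b))"

definition Mainardi :: "real \<Rightarrow> real \<Rightarrow> real" where
  "Mainardi nu z = Wright (- z) (- nu) (1 - nu)"

definition erf :: "real \<Rightarrow> real" where
  "erf x = 2 / sqrt pi *
     (if 0 \<le> x then integral {0..x} (\<lambda>u. exp (- (u\<^sup>2)))
      else - integral {x..0} (\<lambda>u. exp (- (u\<^sup>2))))"

end

theory Submission
  imports Defs
begin


lemma rGamma_bound_01: "\<exists>C\<ge>0. \<forall>y\<in>{0..1::real}. \<bar>rGamma y\<bar> \<le> C"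
proof -
  have "compact (rGamma ` {0..1::real})"
    by (intro compact_continuous_image continuous_on_rGamma) auto
  then obtain B where "\<forall>x\<in>rGamma ` {0..1::real}. norm x \<le> B"
    using compact_imp_bounded bounded_iff by metis
  then show ?thesis by (intro exI[of _ "max B 0"]) auto
qed

lemma rGamma_bound_fact:
  assumes C: "C \<ge> 0" "\<forall>y\<in>{0..1::real}. \<bar>rGamma y\<bar> \<le> C"
  shows "- real m \<le> y \<Longrightarrow> y \<le> 1 \<Longrightarrow> \<bar>rGamma y\<bar> \<le> C * fact m"
proof (induction m arbitrary: y)
  case 0
  then show ?case using C by auto
next
  case (Suc m)
  show ?case
  proof (cases "y \<ge> 0")
    case True
    then have "\<bar>rGamma y\<bar> \<le> C" using C Suc.prems by auto
    also have "C \<le> C * fact (Suc m)" using C(1) mult_left_mono[OF fact_ge_1[of "Suc m"], of C] by simp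
    finally show ?thesis .
  next
    case False
    have eq: "rGamma y = y * rGamma (y + 1)" using rGamma_plus1[of y] by simp
    have "\<bar>rGamma (y+1)\<bar> \<le> C * fact m" using Suc.IH[of "y+1"] Suc.prems False by auto
    moreover have "\<bar>y\<bar> \<le> real (Suc m)" using Suc.prems False by auto
    ultimately have "\<bar>y\<bar> * \<bar>rGamma (y+1)\<bar> \<le> real (Suc m) * (C * fact m)"
      by (intro mult_mono) auto
    then show ?thesis unfolding eq by (simp add: abs_mult algebra_simps)
  qed
qed

lemma fact_half_le: "(fact (n div 2) :: real) \<le> sqrt (fact n)"
proof -
  define m where "m = n div 2"
  have "fact m * fact m * real (2*m choose m) = fact (2*m)"
    using binomial_fact_lemma[of m "2*m"] by (metis mult_2 add_diff_cancel_left' le_add1 of_nat_fact of_nat_mult)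
  moreover have "real (2*m choose m) \<ge> 1" by (simp add: Suc_leI)
  ultimately have "fact m * fact m \<le> (fact (2*m) :: real)"
    by (metis mult_le_cancel_left1 mult.commute fact_gt_zero mult_pos_pos not_le order_less_le)
  also have "(fact (2*m) :: real) \<le> fact n" using fact_mono[of "2*m" n] unfolding m_def by auto
  finally have "(fact m)^2 \<le> (fact n :: real)" by (simp add: power2_eq_square)
  then show ?thesis unfolding m_def by (simp add: real_le_rsqrt)
qed

lemma summable_majorant:
  assumes "K \<ge> (0::real)"
  shows "summable (\<lambda>n. C * K^n / sqrt (fact n))"
proof -
  have "summable (\<lambda>n. K^n / sqrt (fact n))"
  proof (rule summable_ratio_test[where c="1/2" and N="nat \<lceil>4*K^2\<rceil>"])
    fix n assume n: "n \<ge> nat \<lceil>4*K^2\<rceil>"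
    have "4*K^2 \<le> real n" using n by linarith
    then have "(2*K)^2 \<le> real (Suc n)" by (simp add: power_mult_distrib)
    then have "2*K \<le> sqrt (real (Suc n))" by (simp add: real_le_rsqrt)
    then have k: "K / sqrt (real (Suc n)) \<le> 1/2" by (simp add: divide_simps)
    have "K^(Suc n) / sqrt (fact (Suc n)) = (K / sqrt (real (Suc n))) * (K^n / sqrt (fact n))"
      by (simp add: real_sqrt_mult)
    also have "\<dots> \<le> 1/2 * (K^n / sqrt (fact n))"
      by (intro mult_right_mono k) (use assms in auto)
    finally show "norm (K^(Suc n) / sqrt (fact (Suc n))) \<le> 1/2 * norm (K^n / sqrt (fact n))"
      using assms by simp
  qed auto
  then have "summable (\<lambda>n. C * (K^n / sqrt (fact n)))" by (rule summable_mult)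
  then show ?thesis by (simp add: times_divide_eq_right)
qed

lemma Wright_term_bound:
  assumes C: "C \<ge> 0" "\<forall>y\<in>{0..1::real}. \<bar>rGamma y\<bar> \<le> C"
    and z: "\<bar>z\<bar> \<le> K" and a: "-1/2 \<le> a" "a \<le> 0" and b: "1/2 \<le> b" "b \<le> (1::real)"
  shows "\<bar>z^n / fact n * rGamma (real n * a + b)\<bar> \<le> C * K^n / sqrt (fact n)"
proof -
  have "2 * real (n div 2) \<ge> real n - 1" by linarith
  then have y1: "- real (n div 2) \<le> real n * a + b"
    proof -
    have "real n * (-1/2) \<le> real n * a" using a by (intro mult_left_mono) auto
    then show ?thesis using b \<open>2 * real (n div 2) \<ge> real n - 1\<close> by linarith
  qed
  have y2: "real n * a + b \<le> 1" using a b by (smt (verit) mult_nonneg_nonpos of_nat_0_le_iff)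
  have rg: "\<bar>rGamma (real n * a + b)\<bar> \<le> C * fact (n div 2)"
    using rGamma_bound_fact[OF C y1 y2] .
  have zn: "\<bar>z^n\<bar> \<le> K^n" by (simp add: power_abs power_mono z)
  have K0: "K \<ge> 0" using z by linarith
  have fpos: "(fact n :: real) > 0" by simp
  have sq: "sqrt (fact n) * sqrt (fact n) = (fact n :: real)" by simp
  have "\<bar>z^n / fact n * rGamma (real n * a + b)\<bar> = \<bar>z^n\<bar> * \<bar>rGamma (real n * a + b)\<bar> / fact n"
    by (simp add: abs_mult)
  also have "\<dots> \<le> K^n * (C * fact (n div 2)) / fact n"
    by (intro divide_right_mono mult_mono zn rg) (use K0 in auto)
  also have "\<dots> \<le> K^n * (C * sqrt (fact n)) / fact n"
    by (intro divide_right_mono mult_left_mono fact_half_le) (use K0 C in auto)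
  also have "\<dots> = C * K^n / sqrt (fact n)"
    using fpos by (subst (2) sq[symmetric]) (simp add: field_simps)
  finally show ?thesis .
qed

definition SK :: "real \<Rightarrow> (real \<times> real \<times> real) set" where
  "SK K = {-K..K} \<times> {-1/2..0} \<times> {1/2..1}"

lemma Wright_cont:
  assumes K: "K \<ge> 0"
  shows "continuous_on (SK K) (\<lambda>p. Wright (fst p) (fst (snd p)) (snd (snd p)))"
proof -
  obtain C where C: "C \<ge> 0" "\<forall>y\<in>{0..1::real}. \<bar>rGamma y\<bar> \<le> C" using rGamma_bound_01 by blast
  define f where "f = (\<lambda>n (p::real\<times>real\<times>real). fst p ^ n / fact n * rGamma (real n * fst (snd p) + snd (snd p)))"
  have ul: "uniform_limit (SK K) (\<lambda>N p. \<Sum>i<N. f i p) (\<lambda>p. suminf (\<lambda>i. f i p)) sequentially"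
  proof (rule Weierstrass_m_test[where M="\<lambda>n. C * K^n / sqrt (fact n)"])
    fix n p assume "p \<in> SK K"
    then show "norm (f n p) \<le> C * K^n / sqrt (fact n)"
      unfolding f_def SK_def using Wright_term_bound[OF C] by (auto simp: abs_le_iff)
  qed (rule summable_majorant[OF K])
  have "continuous_on (SK K) (\<lambda>p. suminf (\<lambda>i. f i p))"
  proof (rule uniform_limit_theorem[OF _ ul])
    show "\<forall>\<^sub>F N in sequentially. continuous_on (SK K) (\<lambda>p. \<Sum>i<N. f i p)"
      unfolding f_def by (intro always_eventually allI continuous_intros continuous_on_compose2[OF continuous_on_rGamma]) auto
  qed simp
  then show ?thesis unfolding Wright_def f_def by simp
qed




definition w :: "real \<Rightarrow> nat \<Rightarrow> real" where
  "w b n = (-1)^n / fact n * rGamma (real n * (-1/2) + b)"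

lemma aux_pow: "(-1)^n / fact n * r * y^n = (-y)^n / fact n * (r::real)"
  by (subst power_minus[of y]) (simp add: mult_ac)

lemma Wright_w: "Wright (-x) (-1/2) b = (\<Sum>n. w b n * x^n)"
  unfolding Wright_def w_def aux_pow ..

lemma summable_w:
  assumes b: "1/2 \<le> b" "b \<le> 1"
  shows "summable (\<lambda>n. w b n * y^n)"
proof -
  obtain C where C: "C \<ge> 0" "\<forall>y\<in>{0..1::real}. \<bar>rGamma y\<bar> \<le> C" using rGamma_bound_01 by blast
  show ?thesis
  proof (rule summable_comparison_test'[OF summable_majorant[of "\<bar>y\<bar>" C]])
    fix n
    have "w b n * y^n = (-y)^n / fact n * rGamma (real n * (-1/2) + b)"
      unfolding w_def by (rule aux_pow)
    then have "norm (w b n * y^n) = \<bar>(-y)^n / fact n * rGamma (real n * (-1/2) + b)\<bar>"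
      by (simp only: real_norm_def)
    also have "\<dots> \<le> C * \<bar>y\<bar>^n / sqrt (fact n)"
      by (rule Wright_term_bound[OF C]) (use b in auto)
    finally show "norm (w b n * y^n) \<le> C * \<bar>y\<bar>^n / sqrt (fact n)" .
  qed simp
qed

lemma Mainardi_w: "Mainardi (1/2) x = (\<Sum>n. w (1/2) n * x^n)"
proof -
  have e: "-(1/2::real) = -1/2" "1 - 1/2 = (1/2::real)" by simp_all
  show ?thesis unfolding Mainardi_def e by (rule Wright_w)
qed

lemma diffs_w: "diffs (w 1) = (\<lambda>n. - w (1/2) n)"
proof
  fix n
  have e: "real (Suc n) * (-1/2) + 1 = real n * (-1/2) + 1/2" by (simp add: field_simps)
  have f: "real (Suc n) * ((-1)^Suc n / fact (Suc n)) = - ((-1)^n / (fact n :: real))"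
    by (simp add: fact_Suc divide_simps del: of_nat_Suc)
  show "diffs (w 1) n = - w (1/2) n"
    unfolding diffs_def w_def e using f by (simp only: mult.assoc[symmetric] of_nat_id)
qed

lemma W1_deriv: "((\<lambda>x. Wright (-x) (-1/2) 1) has_real_derivative - Mainardi (1/2) x) (at x)"
proof -
  have "((\<lambda>x. \<Sum>n. w 1 n * x^n) has_field_derivative (\<Sum>n. diffs (w 1) n * x^n)) (at x)"
    by (rule termdiffs_strong_converges_everywhere) (rule summable_w, auto)
  moreover have "(\<Sum>n. diffs (w 1) n * x^n) = - Mainardi (1/2) x"
  proof -
    have "(\<Sum>n. diffs (w 1) n * x^n) = (\<Sum>n. - (w (1/2) n * x^n))" unfolding diffs_w by simp
    also have "\<dots> = - (\<Sum>n. w (1/2) n * x^n)" by (rule suminf_minus) (rule summable_w, auto)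
    also have "\<dots> = - Mainardi (1/2) x" unfolding Mainardi_w ..
    finally show ?thesis .
  qed
  ultimately show ?thesis unfolding Wright_w by simp
qed

lemma W1_zero: "Wright 0 (-1/2) 1 = 1"
proof -
  have "Wright (-0) (-1/2) 1 = (\<Sum>n. w 1 n * 0^n)" by (rule Wright_w)
  also have "\<dots> = w 1 0" by (rule powser_zero)
  finally show ?thesis by (simp add: w_def inverse_eq_divide)
qed

lemma rGamma_half_minus:
  "rGamma (1/2 - real k) = (-1)^k * fact (2*k) / (4^k * fact k * sqrt pi)"
proof (induction k)
  case 0
  then show ?case by (simp add: rGamma_inverse_Gamma Gamma_one_half_real inverse_eq_divide)
next
  case (Suc k)
  have "rGamma (1/2 - real (Suc k)) = (1/2 - real (Suc k)) * rGamma (1/2 - real k)"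
    using rGamma_plus1[of "1/2 - real (Suc k)"] by simp
  also have "\<dots> = (1/2 - real (Suc k)) * ((-1)^k * fact (2*k) / (4^k * fact k * sqrt pi))"
    using Suc.IH by simp
  also have "\<dots> = (-1)^Suc k * fact (2*Suc k) / (4^Suc k * fact (Suc k) * sqrt pi)"
  proof -
    have F: "(fact (2*Suc k) :: real) = (2*real k+2)*(2*real k+1)*fact(2*k)"
      by (simp add: fact_Suc algebra_simps)
    have G: "(fact (Suc k) :: real) = (real k + 1) * fact k" by (simp add: fact_Suc algebra_simps)
    have pi: "sqrt pi > 0" by simp
    have alg: "(1/2 - (x+1)) * (s*F/(q*fk*p)) = (-s)*((2*x+2)*(2*x+1)*F)/((4*q)*((x+1)*fk)*p)"
      if a: "fk > 0" "p > 0" "q > 0" "x \<ge> 0" for x s F fk p q::real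
    proof -
      have n: "(-s)*((2*x+2)*(2*x+1)*F) = (2*(x+1))*((-s)*(2*x+1)*F)" by algebra
      have d: "(4*q)*((x+1)*fk)*p = (2*(x+1))*(2*q*fk*p)" by algebra
      have "(-s)*((2*x+2)*(2*x+1)*F)/((4*q)*((x+1)*fk)*p) = ((-s)*(2*x+1)*F) / (2*q*fk*p)"
        unfolding n d using a by (intro mult_divide_mult_cancel_left) auto
      also have "\<dots> = (1/2 - (x+1)) * (s*F/(q*fk*p))" using a by (simp add: field_simps)
      finally show ?thesis ..
    qed
    have e1: "(1/2 - real (Suc k)) = 1/2 - (real k + 1)" by simp
    have e2: "(-1::real)^Suc k = - ((-1)^k)" by simp
    have e3: "(4::real)^Suc k = 4 * 4^k" by simp
    show ?thesis unfolding F G e1 e2 e3 by (rule alg) (use pi in auto)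
  qed
  finally show ?case .
qed

lemma rGamma_neg_nat: "rGamma (- real k) = 0"
  by (simp add: rGamma_inverse_Gamma Gamma_eq_zero_iff)

lemma Mainardi_half: "Mainardi (1/2) x = exp (- (x^2) / 4) / sqrt pi"
proof -
  have "(\<lambda>n. w (1/2) n * x^n) sums (exp (- (x^2) / 4) / sqrt pi)"
  proof (subst sums_mono_reindex[of "\<lambda>k. 2*k", symmetric])
    show "strict_mono (\<lambda>k::nat. 2*k)" by (simp add: strict_mono_def)
  next
    fix n assume "n \<notin> range (\<lambda>k::nat. 2*k)"
    then have "odd n" by (auto elim!: evenE)
    define k where "k = n div 2"
    have n: "n = 2*k+1" unfolding k_def using \<open>odd n\<close> by simp
    have "real n * (-1/2) + 1/2 = - real k" unfolding n by (simp add: field_simps)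
    then show "w (1/2) n * x^n = 0" unfolding w_def by (simp add: rGamma_neg_nat)
  next
    have "(\<lambda>k. (- (x^2) / 4)^k /\<^sub>R fact k) sums exp (- (x^2) / 4)" by (rule exp_converges)
    then have "(\<lambda>k. (- (x^2) / 4)^k /\<^sub>R fact k / sqrt pi) sums (exp (- (x^2) / 4) / sqrt pi)"
      by (rule sums_divide)
    moreover have "w (1/2) (2*k) * x^(2*k) = (- (x^2) / 4)^k /\<^sub>R fact k / sqrt pi" for k
    proof -
      have e: "real (2*k) * (-1/2) + 1/2 = 1/2 - real k" by simp
      have p1: "((-1::real)^(2*k)) = 1" by (simp add: power_mult)
      have p2: "(- (x^2) / 4)^k = (-1)^k * x^(2*k) / 4^k"
      proof -
        have "(- (x^2) / 4)^k = ((-1) * x^2 / 4)^k" by simp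
        also have "\<dots> = (-1)^k * (x^2)^k / 4^k" by (simp only: power_divide power_mult_distrib)
        finally show ?thesis by (simp only: power_mult)
      qed
      have alg: "\<And>F fk p q s X::real. F > 0 \<Longrightarrow> fk > 0 \<Longrightarrow> p > 0 \<Longrightarrow> q > 0 \<Longrightarrow>
         1 / F * (s * F / (q * fk * p)) * X = (s * X / q) / fk / p"
        by (simp add: field_simps)
      show ?thesis unfolding w_def e rGamma_half_minus p1 p2
        using alg[of "fact (2*k)" "fact k" "sqrt pi" "4^k" "(-1)^k" "x^(2*k)"] by (simp add: inverse_eq_divide)
    qed
    ultimately show "(\<lambda>k. w (1/2) (2*k) * x^(2*k)) sums (exp (- (x^2) / 4) / sqrt pi)" by simp
  qed
  then show ?thesis unfolding Mainardi_w by (rule sums_unique[symmetric])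
qed




lemma E_deriv: "((\<lambda>x. 1 - Wright (-x) (-1/2) 1) has_real_derivative exp (- (x^2) / 4) / sqrt pi) (at x)"
proof -
  have "((\<lambda>x. 1 - Wright (-x) (-1/2) 1) has_real_derivative 0 - (- Mainardi (1/2) x)) (at x)"
    by (intro derivative_intros W1_deriv)
  then show ?thesis by (simp add: Mainardi_half)
qed

lemma P_deriv: "((\<lambda>u. 1 - Wright (-(2*u)) (-1/2) 1) has_real_derivative 2 / sqrt pi * exp (- (u^2))) (at u)"
proof -
  have "((\<lambda>u. 1 - Wright (-(2*u)) (-1/2) 1) has_real_derivative
          (exp (- ((2*u)^2) / 4) / sqrt pi) * 2) (at u)"
  proof -
    have d2: "((\<lambda>u. 2*u) has_real_derivative 2) (at u)"
      using DERIV_cmult_Id[of 2] by simp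
    show ?thesis
      by (rule DERIV_chain2[where f="\<lambda>x. 1 - Wright (-x) (-1/2) 1" and g="\<lambda>u. 2*u", OF E_deriv d2])
  qed
  moreover have "(exp (- ((2*u)^2) / 4) / sqrt pi) * 2 = 2 / sqrt pi * exp (- (u^2))"
    by (simp add: power_mult_distrib)
  ultimately show ?thesis by (simp add: mult.commute)
qed

definition Pf :: "real \<Rightarrow> real" where "Pf u = 1 - Wright (-(2*u)) (-1/2) 1"

lemma Pf0: "Pf 0 = 0" unfolding Pf_def using W1_zero by simp

lemma Q_deriv: "((\<lambda>u. sqrt pi / 2 * Pf u) has_real_derivative exp (- (u^2))) (at u)"
proof -
  have "((\<lambda>u. sqrt pi / 2 * Pf u) has_real_derivative sqrt pi / 2 * (2 / sqrt pi * exp (- (u^2)))) (at u)"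
    unfolding Pf_def by (intro DERIV_cmult P_deriv)
  then show ?thesis by simp
qed

lemma Q_vd: "((\<lambda>u. sqrt pi / 2 * Pf u) has_vector_derivative exp (- (x^2))) (at x within S)"
  using Q_deriv[of x] has_real_derivative_iff_has_vector_derivative has_vector_derivative_at_within by blast

lemma erf_Pf: "erf y = Pf y"
proof (cases "0 \<le> y")
  case True
  have "((\<lambda>u. exp (- (u^2))) has_integral (sqrt pi / 2 * Pf y - sqrt pi / 2 * Pf 0)) {0..y}"
    by (rule fundamental_theorem_of_calculus[OF True Q_vd])
  then have "integral {0..y} (\<lambda>u. exp (- (u^2))) = sqrt pi / 2 * Pf y"
    using Pf0 by (simp add: integral_unique)
  moreover have "erf y = 2 / sqrt pi * integral {0..y} (\<lambda>u. exp (- (u^2)))"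
    unfolding erf_def using True by simp
  ultimately have "erf y = 2 / sqrt pi * (sqrt pi / 2 * Pf y)" by (simp only:)
  then show ?thesis by simp
next
  case False
  have "((\<lambda>u. exp (- (u^2))) has_integral (sqrt pi / 2 * Pf 0 - sqrt pi / 2 * Pf y)) {y..0}"
    by (rule fundamental_theorem_of_calculus[OF _ Q_vd]) (use False in auto)
  then have "integral {y..0} (\<lambda>u. exp (- (u^2))) = - (sqrt pi / 2 * Pf y)"
    using Pf0 by (simp add: integral_unique)
  moreover have "erf y = - (2 / sqrt pi * integral {y..0} (\<lambda>u. exp (- (u^2))))"
    unfolding erf_def using False by simp
  ultimately have "erf y = - (2 / sqrt pi * (- (sqrt pi / 2 * Pf y)))" by (simp only:)
  then show ?thesis by simp
qed

lemma W1_erf: "1 - Wright (-x) (-1/2) 1 = erf (x/2)"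
  unfolding erf_Pf Pf_def by simp

lemma erf_strict_mono: assumes "a < b" shows "erf a < erf b"
  unfolding erf_Pf
proof (rule DERIV_pos_imp_increasing[OF assms])
  fix x show "\<exists>y. (Pf has_real_derivative y) (at x) \<and> 0 < y"
    using P_deriv[of x] unfolding Pf_def[abs_def] by (intro exI[of _ "2 / sqrt pi * exp (- (x^2))"]) auto
qed

lemma erf_pos: "y > 0 \<Longrightarrow> erf y > 0"
  using erf_strict_mono[of 0 y] erf_Pf Pf0 by simp




lemma W_lim_gen:
  assumes K: "K \<ge> 0" and z: "(z \<longlongrightarrow> z0) F" and a: "(a \<longlongrightarrow> a0) F" and b: "(b \<longlongrightarrow> b0) F"
    and mem: "(z0, a0, b0) \<in> SK K" and ev: "eventually (\<lambda>x. (z x, a x, b x) \<in> SK K) F"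
  shows "((\<lambda>x. Wright (z x) (a x) (b x)) \<longlongrightarrow> Wright z0 a0 b0) F"
proof -
  have "((\<lambda>x. (z x, a x, b x)) \<longlongrightarrow> (z0, a0, b0)) F" by (intro tendsto_intros z a b)
  from continuous_on_tendsto_compose[OF Wright_cont[OF K] this mem ev] show ?thesis by simp
qed

lemma ev01: "eventually (\<lambda>\<alpha>. 0 < \<alpha> \<and> \<alpha> < (1::real)) (at_left 1)"
  using eventually_at_left_real[of 0 "1::real"] by (auto elim: eventually_mono)

lemma W1_lim:
  assumes z: "(z \<longlongrightarrow> z0) (at_left 1)"
  shows "((\<lambda>\<alpha>. Wright (- z \<alpha>) (- \<alpha> / 2) 1) \<longlongrightarrow> Wright (- z0) (- 1 / 2) 1) (at_left (1::real))"
proof (rule W_lim_gen[where K="\<bar>z0\<bar> + 1"])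
  show "((\<lambda>\<alpha>. - z \<alpha>) \<longlongrightarrow> - z0) (at_left 1)" by (intro tendsto_intros z)
  show "((\<lambda>\<alpha>::real. - \<alpha> / 2) \<longlongrightarrow> - 1 / 2) (at_left 1)" by (intro tendsto_eq_intros tendsto_ident_at) auto
  have "eventually (\<lambda>\<alpha>. dist (z \<alpha>) z0 < 1) (at_left 1)" using tendsto_iff[THEN iffD1, OF z, rule_format, of 1] by simp
  then show "eventually (\<lambda>\<alpha>. (- z \<alpha>, - \<alpha> / 2, 1) \<in> SK (\<bar>z0\<bar> + 1)) (at_left 1)"
    using ev01
  proof eventually_elim
    case (elim \<alpha>)
    then have h: "\<bar>z \<alpha> - z0\<bar> < 1" "0 < \<alpha>" "\<alpha> < 1" by (simp_all add: dist_real_def)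
    have "- (\<bar>z0\<bar> + 1) \<le> - z \<alpha>" "- z \<alpha> \<le> \<bar>z0\<bar> + 1" using h(1) by arith+
    moreover have "-1/2 \<le> - \<alpha> / 2" "- \<alpha> / 2 \<le> 0" using h by simp_all
    ultimately show ?case unfolding SK_def by simp
  qed
qed (auto simp: SK_def)

lemma M_lim:
  assumes z: "(z \<longlongrightarrow> z0) (at_left 1)"
  shows "((\<lambda>\<alpha>. Mainardi (\<alpha>/2) (z \<alpha>)) \<longlongrightarrow> Mainardi (1/2) z0) (at_left (1::real))"
  unfolding Mainardi_def
proof (rule W_lim_gen[where K="\<bar>z0\<bar> + 1"])
  show "((\<lambda>\<alpha>. - z \<alpha>) \<longlongrightarrow> - z0) (at_left 1)" by (intro tendsto_intros z)
  show "((\<lambda>\<alpha>::real. - (\<alpha> / 2)) \<longlongrightarrow> - (1 / 2)) (at_left 1)" by (intro tendsto_eq_intros tendsto_ident_at) auto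
  show "((\<lambda>\<alpha>::real. 1 - \<alpha> / 2) \<longlongrightarrow> 1 - 1 / 2) (at_left 1)" by (intro tendsto_eq_intros tendsto_ident_at) auto
  have "eventually (\<lambda>\<alpha>. dist (z \<alpha>) z0 < 1) (at_left 1)" using tendsto_iff[THEN iffD1, OF z, rule_format, of 1] by simp
  then show "eventually (\<lambda>\<alpha>. (- z \<alpha>, - (\<alpha> / 2), 1 - \<alpha> / 2) \<in> SK (\<bar>z0\<bar> + 1)) (at_left 1)"
    using ev01
  proof eventually_elim
    case (elim \<alpha>)
    then have h: "\<bar>z \<alpha> - z0\<bar> < 1" "0 < \<alpha>" "\<alpha> < 1" by (simp_all add: dist_real_def)
    have "- (\<bar>z0\<bar> + 1) \<le> - z \<alpha>" "- z \<alpha> \<le> \<bar>z0\<bar> + 1" using h(1) by arith+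
    moreover have "-1/2 \<le> - (\<alpha> / 2)" "- (\<alpha> / 2) \<le> 0" "1/2 \<le> 1 - \<alpha> / 2" "1 - \<alpha> / 2 \<le> 1" using h by simp_all
    ultimately show ?case unfolding SK_def by simp
  qed
qed (auto simp: SK_def)

lemma M_pos_unif:
  assumes x1: "0 < x1" and x12: "x1 \<le> x2"
  shows "eventually (\<lambda>\<alpha>. \<forall>x\<in>{x1..x2}. Mainardi (\<alpha>/2) x > 0) (at_left (1::real))"
proof -
  define f where "f = (\<lambda>p::real\<times>real\<times>real. Wright (fst p) (fst (snd p)) (snd (snd p)))"
  have K: "x2 \<ge> 0" using x1 x12 by linarith
  have "compact (SK x2)" unfolding SK_def by (intro compact_Times compact_Icc)
  then have uc: "uniformly_continuous_on (SK x2) f"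
    using compact_uniformly_continuous Wright_cont[OF K] unfolding f_def by blast
  define m0 where "m0 = exp (- (x2^2) / 4) / sqrt pi"
  have m0: "m0 > 0" unfolding m0_def by simp
  obtain d where d: "d > 0" and dd: "\<And>p q. p \<in> SK x2 \<Longrightarrow> q \<in> SK x2 \<Longrightarrow> dist q p < d \<Longrightarrow> dist (f q) (f p) < m0"
    using uc m0 unfolding uniformly_continuous_on_def by metis
  have "eventually (\<lambda>\<alpha>. \<alpha> \<in> {max 0 (1 - d)<..<1}) (at_left (1::real))"
    using d by (intro eventually_at_left_real) auto
  then show ?thesis
  proof eventually_elim
    case (elim \<alpha>)
    then have a: "0 < \<alpha>" "\<alpha> < 1" "1 - d < \<alpha>" by auto
    show ?case
    proof
      fix x assume x: "x \<in> {x1..x2}"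
      define p where "p = (-x, -(1/2::real), 1 - 1/2::real)"
      define q where "q = (-x, -(\<alpha>/2), 1 - \<alpha>/2)"
      have pS: "p \<in> SK x2" "q \<in> SK x2" using x a x1 unfolding p_def q_def SK_def by auto
      have "dist q p = sqrt ((dist (-(\<alpha>/2)) (-(1/2)))^2 + (dist (1 - \<alpha>/2) (1 - 1/2))^2)"
        unfolding p_def q_def dist_Pair_Pair by simp
      also have "\<dots> = sqrt ((\<alpha>/2 - 1/2)^2 + (\<alpha>/2 - 1/2)^2)"
        unfolding dist_real_def by (simp add: power2_abs power2_commute)
      also have "\<dots> \<le> \<bar>\<alpha>/2 - 1/2\<bar> + \<bar>\<alpha>/2 - 1/2\<bar>" by (rule sqrt_sum_squares_le_sum_abs)
      also have "\<dots> < d" using a by auto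
      finally have "dist (f q) (f p) < m0" using dd pS by blast
      moreover have "f p = exp (- (x^2) / 4) / sqrt pi"
        unfolding f_def p_def using Mainardi_half[of x] unfolding Mainardi_def by simp
      moreover have "exp (- (x^2) / 4) / sqrt pi \<ge> m0"
        unfolding m0_def using x x1 by (intro divide_right_mono) (auto intro!: power_mono)
      moreover have "f q = Mainardi (\<alpha>/2) x" unfolding f_def q_def Mainardi_def by simp
      ultimately show "Mainardi (\<alpha>/2) x > 0" by (auto simp: dist_real_def)
    qed
  qed
qed




lemma Wright_cont_x:
  assumes K: "K \<ge> 0" and a: "-1/2 \<le> a" "a \<le> 0" and b: "1/2 \<le> b" "b \<le> 1"
  shows "continuous_on {-K..K} (\<lambda>x. Wright (-x) a b)"
proof -
  have "continuous_on {-K..K} (\<lambda>x. (\<lambda>p. Wright (fst p) (fst (snd p)) (snd (snd p))) (-x, a, b))"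
    by (rule continuous_on_compose2[OF Wright_cont[OF K]]) (use a b in \<open>auto intro!: continuous_intros simp: SK_def\<close>)
  then show ?thesis by simp
qed

lemma Gamma_half_lim: "((\<lambda>\<alpha>. Gamma (1 - \<alpha> / 2)) \<longlongrightarrow> sqrt pi) (at_left (1::real))"
proof -
  have nz: "1/2 \<notin> (\<int>\<^sub>\<le>\<^sub>0 :: real set)" by auto
  have "isCont Gamma (1/2::real)" using isCont_Gamma[OF continuous_ident nz] by simp
  moreover have "((\<lambda>\<alpha>. 1 - \<alpha> / 2) \<longlongrightarrow> (1/2::real)) (at_left 1)"
    by (intro tendsto_eq_intros tendsto_ident_at) auto
  ultimately have "((\<lambda>\<alpha>. Gamma (1 - \<alpha> / 2)) \<longlongrightarrow> Gamma (1/2)) (at_left (1::real))"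
    by (rule isCont_tendsto_compose)
  then show ?thesis by (simp add: Gamma_one_half_real)
qed

lemma Gamma_3half_lim: "((\<lambda>\<alpha>. Gamma (1 + \<alpha> / 2)) \<longlongrightarrow> sqrt pi / 2) (at_left (1::real))"
proof -
  have nz: "3/2 \<notin> (\<int>\<^sub>\<le>\<^sub>0 :: real set)" by auto
  have "isCont Gamma (3/2::real)" using isCont_Gamma[OF continuous_ident nz] by simp
  moreover have "((\<lambda>\<alpha>. 1 + \<alpha> / 2) \<longlongrightarrow> (3/2::real)) (at_left 1)"
    by (intro tendsto_eq_intros tendsto_ident_at) auto
  ultimately have "((\<lambda>\<alpha>. Gamma (1 + \<alpha> / 2)) \<longlongrightarrow> Gamma (3/2)) (at_left (1::real))"
    by (rule isCont_tendsto_compose)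
  moreover have "Gamma (3/2::real) = sqrt pi / 2"
  proof -
    have nz2: "1/2 \<notin> (\<int>\<^sub>\<le>\<^sub>0 :: real set)" by auto
    have "Gamma (1/2 + 1::real) = 1/2 * Gamma (1/2)" by (rule Gamma_plus1[OF nz2])
    moreover have "(1/2 + 1::real) = 3/2" by simp
    ultimately show ?thesis by (simp add: Gamma_one_half_real)
  qed
  ultimately show ?thesis by simp
qed




theorem theorem7:
  fixes rho c L q\<^sub>0 T\<^sub>0 T\<^sub>m \<mu> :: real and \<xi> :: "real \<Rightarrow> real"
  assumes pos: "rho > 0" "c > 0" "L > 0" "q\<^sub>0 > 0" and temp: "T\<^sub>0 > T\<^sub>m"
    and xi: "\<And>\<alpha>. 0 < \<alpha> \<Longrightarrow> \<alpha> < 1 \<Longrightarrow>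
       \<xi> \<alpha> > 0 \<and>
       \<xi> \<alpha> * (1 - Wright (- \<xi> \<alpha>) (- \<alpha> / 2) 1) / Mainardi (\<alpha> / 2) (\<xi> \<alpha>)
         = c * (T\<^sub>0 - T\<^sub>m) * Gamma (1 - \<alpha> / 2) / (L * Gamma (1 + \<alpha> / 2)) \<and>
       (\<forall>y>0. y * (1 - Wright (- y) (- \<alpha> / 2) 1) / Mainardi (\<alpha> / 2) y
         = c * (T\<^sub>0 - T\<^sub>m) * Gamma (1 - \<alpha> / 2) / (L * Gamma (1 + \<alpha> / 2)) \<longrightarrow> y = \<xi> \<alpha>)"
    and mu: "\<mu> > 0 \<and> \<mu> * exp (\<mu>\<^sup>2) * erf \<mu> = c * (T\<^sub>0 - T\<^sub>m) / (L * sqrt pi) \<and>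
       (\<forall>y>0. y * exp (y\<^sup>2) * erf y = c * (T\<^sub>0 - T\<^sub>m) / (L * sqrt pi) \<longrightarrow> y = \<mu>)"
    and lam_def: "\<And>\<alpha>. lam \<alpha> = q\<^sub>0 * Gamma (1 - \<alpha> / 2) / (rho * c * (T\<^sub>0 - T\<^sub>m))
                    * (1 - Wright (- \<xi> \<alpha>) (- \<alpha> / 2) 1)"
    and lam1_def: "lam1 = q\<^sub>0 / (rho * L) * exp (- (\<mu>\<^sup>2)) / \<mu>"
  shows "((\<lambda>\<alpha>. q\<^sub>0\<^sup>2 * (Gamma (1 - \<alpha> / 2))\<^sup>2 / (rho * c * (T\<^sub>0 - T\<^sub>m)\<^sup>2)
                    * (1 - Wright (- \<xi> \<alpha>) (- \<alpha> / 2) 1)\<^sup>2)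
           \<longlongrightarrow> pi * q\<^sub>0\<^sup>2 / (rho * c * (T\<^sub>0 - T\<^sub>m)\<^sup>2) * (erf \<mu>)\<^sup>2) (at_left 1)
     \<and> (\<forall>t>0. ((\<lambda>\<alpha>. lam \<alpha> * \<xi> \<alpha> * t powr (\<alpha> / 2))
           \<longlongrightarrow> 2 * lam1 * \<mu> * sqrt t) (at_left 1))
     \<and> (\<forall>t>0. \<forall>x\<ge>0. ((\<lambda>\<alpha>. T\<^sub>0 - (T\<^sub>0 - T\<^sub>m) / (1 - Wright (- \<xi> \<alpha>) (- \<alpha> / 2) 1)
                    * (1 - Wright (- (x / (lam \<alpha> * t powr (\<alpha> / 2)))) (- \<alpha> / 2) 1))
           \<longlongrightarrow> T\<^sub>0 - (T\<^sub>0 - T\<^sub>m) / erf \<mu> * erf (x / (2 * lam1 * sqrt t))) (at_left 1))"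
proof -
  have DT: "T\<^sub>0 - T\<^sub>m > 0" using temp by simp
  have mu0: "\<mu> > 0" and mueq: "\<mu> * exp (\<mu>\<^sup>2) * erf \<mu> = c * (T\<^sub>0 - T\<^sub>m) / (L * sqrt pi)"
    using mu by auto
  have erfmu: "erf \<mu> > 0" using erf_pos[OF mu0] .
  have erfeq: "erf \<mu> = c * (T\<^sub>0 - T\<^sub>m) / (L * sqrt pi) / (\<mu> * exp (\<mu>\<^sup>2))"
  proof -
    have me: "\<mu> * exp (\<mu>\<^sup>2) > 0" using mu0 by simp
    have "erf \<mu> = (\<mu> * exp (\<mu>\<^sup>2) * erf \<mu>) / (\<mu> * exp (\<mu>\<^sup>2))" using me mu0 by simp
    then show ?thesis unfolding mueq .
  qed
  define R where "R = (\<lambda>\<alpha>::real. c * (T\<^sub>0 - T\<^sub>m) * Gamma (1 - \<alpha> / 2) / (L * Gamma (1 + \<alpha> / 2)))"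
  have R_lim: "(R \<longlongrightarrow> 2 * c * (T\<^sub>0 - T\<^sub>m) / L) (at_left 1)"
  proof -
    have "(R \<longlongrightarrow> c * (T\<^sub>0 - T\<^sub>m) * sqrt pi / (L * (sqrt pi / 2))) (at_left 1)"
      unfolding R_def using pos by (intro tendsto_intros Gamma_half_lim Gamma_3half_lim) auto
    moreover have "c * (T\<^sub>0 - T\<^sub>m) * sqrt pi / (L * (sqrt pi / 2)) = 2 * c * (T\<^sub>0 - T\<^sub>m) / L"
      using pos by (simp add: field_simps)
    ultimately show ?thesis by (simp only:)
  qed
  define G1 where "G1 = (\<lambda>x::real. x * erf (x/2) - 2 * c * (T\<^sub>0 - T\<^sub>m) / L * (exp (- (x^2) / 4) / sqrt pi))"
  define G where "G = (\<lambda>\<alpha> x::real. x * (1 - Wright (-x) (-\<alpha>/2) 1) - R \<alpha> * Mainardi (\<alpha>/2) x)"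
  have G_lim: "((\<lambda>\<alpha>. G \<alpha> x) \<longlongrightarrow> G1 x) (at_left 1)" for x
  proof -
    have "((\<lambda>\<alpha>. G \<alpha> x) \<longlongrightarrow> x * (1 - Wright (-x) (-1/2) 1) - 2 * c * (T\<^sub>0 - T\<^sub>m) / L * Mainardi (1/2) x) (at_left 1)"
      unfolding G_def by (intro tendsto_intros W1_lim M_lim R_lim)
    then show ?thesis unfolding G1_def W1_erf Mainardi_half .
  qed
  have G1_mono: "G1 x < G1 y" if xy: "0 < x" "x < y" for x y
  proof -
    have e1: "0 < erf (x/2)" using erf_pos xy by simp
    have e2: "erf (x/2) < erf (y/2)" using erf_strict_mono xy by simp
    have "x * erf (x/2) < y * erf (y/2)"
    proof -
      have "x * erf (x/2) \<le> x * erf (y/2)" using e2 xy by (intro mult_left_mono) auto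
      also have "\<dots> < y * erf (y/2)" using xy e1 e2 by (intro mult_strict_right_mono) auto
      finally show ?thesis .
    qed
    moreover have "exp (- (y^2) / 4) < exp (- (x^2) / 4)"
      using xy by (simp add: power_strict_mono)
    then have "exp (- (y^2) / 4) / sqrt pi < exp (- (x^2) / 4) / sqrt pi" by (simp add: divide_strict_right_mono)
    moreover have "2 * c * (T\<^sub>0 - T\<^sub>m) / L > 0" using pos DT by simp
    ultimately show ?thesis unfolding G1_def
      by (smt (verit) mult_strict_left_mono)
  qed
  have G1_root: "G1 (2*\<mu>) = 0"
  proof -
    note erfeq
    then have "2 * \<mu> * erf \<mu> = 2 * c * (T\<^sub>0 - T\<^sub>m) / L * (exp (- (\<mu>^2)) / sqrt pi)"
      using mu0 pos by (simp add: field_simps exp_minus)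
    moreover have "(2*\<mu>)^2 / 4 = \<mu>^2" by (simp add: power_mult_distrib)
    ultimately show ?thesis unfolding G1_def by simp
  qed
  have xi_lim: "(\<xi> \<longlongrightarrow> 2*\<mu>) (at_left 1)"
  proof (rule tendstoI)
    fix e :: real assume e: "e > 0"
    define \<epsilon> where "\<epsilon> = min (e/2) \<mu>"
    have eps: "\<epsilon> > 0" "\<epsilon> \<le> e/2" "\<epsilon> \<le> \<mu>" unfolding \<epsilon>_def using e mu0 by auto
    define x1 where "x1 = 2*\<mu> - \<epsilon>"
    define x2 where "x2 = 2*\<mu> + \<epsilon>"
    have x1: "0 < x1" "x1 < 2*\<mu>" "x1 \<le> x2" "2*\<mu> < x2" unfolding x1_def x2_def using eps mu0 by auto
    have g1: "G1 x1 < 0" using G1_mono[of x1 "2*\<mu>"] x1 G1_root by simp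
    have g2: "G1 x2 > 0" using G1_mono[of "2*\<mu>" x2] x1 mu0 G1_root by simp
    have ev1: "eventually (\<lambda>\<alpha>. G \<alpha> x1 < 0) (at_left 1)" using order_tendstoD(2)[OF G_lim g1] .
    have ev2: "eventually (\<lambda>\<alpha>. G \<alpha> x2 > 0) (at_left 1)" using order_tendstoD(1)[OF G_lim g2] .
    show "eventually (\<lambda>\<alpha>. dist (\<xi> \<alpha>) (2*\<mu>) < e) (at_left 1)"
      using ev1 ev2 M_pos_unif[OF x1(1) x1(3)] ev01
    proof eventually_elim
      case (elim \<alpha>)
      then have a: "0 < \<alpha>" "\<alpha> < 1" by auto
      have K: "x2 \<ge> 0" using x1 by linarith
      have sub: "{x1..x2} \<subseteq> {-x2..x2}" using x1 by auto
      have c1: "continuous_on {x1..x2} (\<lambda>x. Wright (-x) (-\<alpha>/2) 1)"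
        by (rule continuous_on_subset[OF Wright_cont_x[OF K] sub]) (use a in auto)
      have c2: "continuous_on {x1..x2} (\<lambda>x. Mainardi (\<alpha>/2) x)"
        unfolding Mainardi_def
        by (rule continuous_on_subset[OF Wright_cont_x[OF K] sub]) (use a in auto)
      have cG: "continuous_on {x1..x2} (G \<alpha>)"
        unfolding G_def by (intro continuous_intros c1 c2)
      obtain y0 where y0: "x1 \<le> y0" "y0 \<le> x2" "G \<alpha> y0 = 0"
        using IVT'[of "G \<alpha>" x1 0 x2, OF _ _ x1(3) cG] elim by auto
      have Mpos: "Mainardi (\<alpha>/2) y0 > 0" using elim y0 by auto
      have "y0 * (1 - Wright (- y0) (- \<alpha> / 2) 1) / Mainardi (\<alpha> / 2) y0 = R \<alpha>"
        using y0(3) Mpos unfolding G_def by (simp add: field_simps)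
      then have "y0 = \<xi> \<alpha>" using xi[OF a] y0 x1 unfolding R_def by auto
      then show ?case using y0 eps unfolding x1_def x2_def dist_real_def by auto
    qed
  qed
  have W_lim: "((\<lambda>\<alpha>. 1 - Wright (- \<xi> \<alpha>) (- \<alpha> / 2) 1) \<longlongrightarrow> erf \<mu>) (at_left 1)"
  proof -
    have "((\<lambda>\<alpha>. 1 - Wright (- \<xi> \<alpha>) (- \<alpha> / 2) 1) \<longlongrightarrow> 1 - Wright (- (2*\<mu>)) (- 1 / 2) 1) (at_left 1)"
      by (intro tendsto_intros W1_lim xi_lim)
    then show ?thesis unfolding W1_erf by simp
  qed
  have lam1_eq: "q\<^sub>0 * sqrt pi / (rho * c * (T\<^sub>0 - T\<^sub>m)) * erf \<mu> = lam1"
  proof -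
    have "q\<^sub>0 * sqrt pi / (rho * c * (T\<^sub>0 - T\<^sub>m)) * erf \<mu> =
      q\<^sub>0 * sqrt pi / (rho * c * (T\<^sub>0 - T\<^sub>m)) * (c * (T\<^sub>0 - T\<^sub>m) / (L * sqrt pi) / (\<mu> * exp (\<mu>\<^sup>2)))"
      by (subst erfeq) (rule refl)
    also have "\<dots> = q\<^sub>0 / (rho * L * \<mu> * exp (\<mu>\<^sup>2))"
    proof -
      have alg: "a1*a2/(a3*a4*a5) * (a4*a5/(a6*a2)/(a7*a8)) = a1/(a3*a6*a7*a8)"
        if "a3>0" "a4>0" "a5>0" "a6>0" "a2>0" "a7>0" "a8>0" for a1 a2 a3 a4 a5 a6 a7 a8 :: real
        using that by (simp add: field_simps)
      show ?thesis by (rule alg) (use pos DT mu0 in auto)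
    qed
    also have "\<dots> = lam1" unfolding lam1_def by (simp add: exp_minus field_simps)
    finally show ?thesis .
  qed
  have lam1_pos: "lam1 > 0" unfolding lam1_def using pos mu0 by simp
  have lam_lim: "(lam \<longlongrightarrow> lam1) (at_left 1)"
  proof -
    have "((\<lambda>\<alpha>. q\<^sub>0 * Gamma (1 - \<alpha> / 2) / (rho * c * (T\<^sub>0 - T\<^sub>m)) * (1 - Wright (- \<xi> \<alpha>) (- \<alpha> / 2) 1))
       \<longlongrightarrow> q\<^sub>0 * sqrt pi / (rho * c * (T\<^sub>0 - T\<^sub>m)) * erf \<mu>) (at_left 1)"
      using pos DT by (intro tendsto_intros Gamma_half_lim W_lim) auto
    then show ?thesis unfolding lam1_eq lam_def[abs_def] .
  qed
  have P1: "((\<lambda>\<alpha>. q\<^sub>0\<^sup>2 * (Gamma (1 - \<alpha> / 2))\<^sup>2 / (rho * c * (T\<^sub>0 - T\<^sub>m)\<^sup>2)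
                    * (1 - Wright (- \<xi> \<alpha>) (- \<alpha> / 2) 1)\<^sup>2)
           \<longlongrightarrow> pi * q\<^sub>0\<^sup>2 / (rho * c * (T\<^sub>0 - T\<^sub>m)\<^sup>2) * (erf \<mu>)\<^sup>2) (at_left 1)"
  proof -
    have "((\<lambda>\<alpha>. q\<^sub>0\<^sup>2 * (Gamma (1 - \<alpha> / 2))\<^sup>2 / (rho * c * (T\<^sub>0 - T\<^sub>m)\<^sup>2)
                    * (1 - Wright (- \<xi> \<alpha>) (- \<alpha> / 2) 1)\<^sup>2)
           \<longlongrightarrow> q\<^sub>0\<^sup>2 * (sqrt pi)\<^sup>2 / (rho * c * (T\<^sub>0 - T\<^sub>m)\<^sup>2) * (erf \<mu>)\<^sup>2) (at_left 1)"
      using pos DT by (intro tendsto_intros Gamma_half_lim W_lim) auto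
    then show ?thesis by (simp add: mult.commute)
  qed
  have P2: "\<forall>t>0. ((\<lambda>\<alpha>. lam \<alpha> * \<xi> \<alpha> * t powr (\<alpha> / 2)) \<longlongrightarrow> 2 * lam1 * \<mu> * sqrt t) (at_left 1)"
  proof (intro allI impI)
    fix t :: real assume t: "t > 0"
    have "((\<lambda>\<alpha>. lam \<alpha> * \<xi> \<alpha> * t powr (\<alpha> / 2)) \<longlongrightarrow> lam1 * (2*\<mu>) * t powr (1/2)) (at_left 1)"
      using t by (intro tendsto_intros lam_lim xi_lim tendsto_powr tendsto_ident_at) auto
    then show "((\<lambda>\<alpha>. lam \<alpha> * \<xi> \<alpha> * t powr (\<alpha> / 2)) \<longlongrightarrow> 2 * lam1 * \<mu> * sqrt t) (at_left 1)"
      using t by (simp add: powr_half_sqrt mult_ac)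
  qed
  have P3: "\<forall>t>0. \<forall>x\<ge>0. ((\<lambda>\<alpha>. T\<^sub>0 - (T\<^sub>0 - T\<^sub>m) / (1 - Wright (- \<xi> \<alpha>) (- \<alpha> / 2) 1)
                    * (1 - Wright (- (x / (lam \<alpha> * t powr (\<alpha> / 2)))) (- \<alpha> / 2) 1))
           \<longlongrightarrow> T\<^sub>0 - (T\<^sub>0 - T\<^sub>m) / erf \<mu> * erf (x / (2 * lam1 * sqrt t))) (at_left 1)"
  proof (intro allI impI)
    fix t x :: real assume t: "t > 0" and x: "x \<ge> 0"
    have pw: "((\<lambda>\<alpha>. t powr (\<alpha> / 2)) \<longlongrightarrow> t powr (1/2)) (at_left 1)"
      using t by (intro tendsto_intros tendsto_powr tendsto_ident_at) auto
    have arg: "((\<lambda>\<alpha>. x / (lam \<alpha> * t powr (\<alpha> / 2))) \<longlongrightarrow> x / (lam1 * sqrt t)) (at_left 1)"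
    proof -
      have "((\<lambda>\<alpha>. x / (lam \<alpha> * t powr (\<alpha> / 2))) \<longlongrightarrow> x / (lam1 * t powr (1/2))) (at_left 1)"
        using t lam1_pos by (intro tendsto_intros lam_lim pw) auto
      then show ?thesis using t by (simp add: powr_half_sqrt)
    qed
    have "((\<lambda>\<alpha>. T\<^sub>0 - (T\<^sub>0 - T\<^sub>m) / (1 - Wright (- \<xi> \<alpha>) (- \<alpha> / 2) 1)
                    * (1 - Wright (- (x / (lam \<alpha> * t powr (\<alpha> / 2)))) (- \<alpha> / 2) 1))
           \<longlongrightarrow> T\<^sub>0 - (T\<^sub>0 - T\<^sub>m) / erf \<mu> * (1 - Wright (- (x / (lam1 * sqrt t))) (- 1 / 2) 1)) (at_left 1)"
      using erfmu by (intro tendsto_intros W_lim W1_lim arg) auto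
    moreover have "1 - Wright (- (x / (lam1 * sqrt t))) (- 1 / 2) 1 = erf (x / (2 * lam1 * sqrt t))"
      unfolding W1_erf by (simp add: mult_ac)
    ultimately show "((\<lambda>\<alpha>. T\<^sub>0 - (T\<^sub>0 - T\<^sub>m) / (1 - Wright (- \<xi> \<alpha>) (- \<alpha> / 2) 1)
                    * (1 - Wright (- (x / (lam \<alpha> * t powr (\<alpha> / 2)))) (- \<alpha> / 2) 1))
           \<longlongrightarrow> T\<^sub>0 - (T\<^sub>0 - T\<^sub>m) / erf \<mu> * erf (x / (2 * lam1 * sqrt t))) (at_left 1)" by simp
  qed
  show ?thesis using P1 P2 P3 by blast
qed


end
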